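(* Let $f_{n,i}$ denote the number of $i$-dimensional faces of the Whitehouse complex $\Delta_n$ ($n\ge 3$), with the convention $f_{m,j}=0$ for $j<-1$ or $j>m-4$. Then $f_{n,-1}=1$ for all $n\ge 3$, and for all $n\ge 4$ and $-1\le i\le n-4$, $$f_{n,i}=(i+2)\,f_{n-1,i}+(n+i-1)\,f_{n-1,i-1}.$$
   Context: The Whitehouse complex $\Delta_n$ ($n\ge 3$) is the simplicial complex with vertex set $V_n=\{S\subseteq\{2,\dots,n\}: 2\le |S|\le n-2\}$, in which a subset $F\subseteq V_n$ is a face iff for all $S,T\in F$ one has $S\subseteq T$, $T\subseteq S$, or $S\cap T=\emptyset$. (So $\Delta_3=\{\emptyset\}$.) A face $F$ has dimension $|F|-1$. *)

theory Defs
  imports Main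
begin

definition whitehouse_vertices :: "nat \<Rightarrow> nat set set" where
  "whitehouse_vertices n = {S. S \<subseteq> {2..n} \<and> 2 \<le> card S \<and> int (card S) \<le> int n - 2}"

definition whitehouse_face :: "nat \<Rightarrow> nat set set \<Rightarrow> bool" where
  "whitehouse_face n F \<longleftrightarrow> F \<subseteq> whitehouse_vertices n \<and>
     (\<forall>S\<in>F. \<forall>T\<in>F. S \<subseteq> T \<or> T \<subseteq> S \<or> S \<inter> T = {})"

definition whitehouse_f :: "nat \<Rightarrow> int \<Rightarrow> nat" where
  "whitehouse_f n i = (if i < -1 \<or> i > int n - 4 then 0
     else card {F. whitehouse_face n F \<and> int (card F) = i + 1})"

end

theory Submission imports Defs begin

definition VV :: "'a set \<Rightarrow> 'a set set" where
  "VV U = {S. S \<subseteq> U \<and> 2 \<le> card S \<and> card S < card U}"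
definition lam :: "'a set set \<Rightarrow> bool" where
  "lam F \<longleftrightarrow> (\<forall>S\<in>F. \<forall>T\<in>F. S \<subseteq> T \<or> T \<subseteq> S \<or> S \<inter> T = {})"
definition Fc :: "'a set \<Rightarrow> nat \<Rightarrow> 'a set set set" where
  "Fc U k = {F. F \<subseteq> VV U \<and> lam F \<and> card F = k}"
definition prj :: "'a \<Rightarrow> 'a set \<Rightarrow> 'a set set \<Rightarrow> 'a set set" where
  "prj a U F = ((\<lambda>D. D - {a}) ` F) \<inter> VV U"
definition up :: "'a \<Rightarrow> 'a set \<Rightarrow> 'a set set \<Rightarrow> 'a set set" where
  "up a C G = (\<lambda>D. if C \<subseteq> D then insert a D else D) ` G"
definition upS :: "'a \<Rightarrow> 'a set \<Rightarrow> 'a set set \<Rightarrow> 'a set set" where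
  "upS a C G = (\<lambda>D. if C \<subset> D then insert a D else D) ` G"
definition sub :: "'a \<Rightarrow> 'a set \<Rightarrow> 'a set \<Rightarrow> 'a set set \<Rightarrow> 'a set set" where
  "sub a U C G = (if C = U then insert U G else insert (insert a C) (upS a C G))"
definition sing :: "'a set \<Rightarrow> 'a set set" where
  "sing U = (\<lambda>x. {x}) ` U"

locale ctx =
  fixes U :: "'a set" and a :: 'a
  assumes fin: "finite U" and anot: "a \<notin> U" and c2: "2 \<le> card U"
begin

lemma cardU': "card (insert a U) = Suc (card U)"
  using fin anot by simp

lemma VV_sub: "S \<in> VV U \<Longrightarrow> S \<subseteq> U \<and> finite S \<and> 2 \<le> card S \<and> card S < card U"
  unfolding VV_def using fin finite_subset by blast

lemma VV'_iff: "S \<in> VV (insert a U) \<longleftrightarrow> S \<subseteq> insert a U \<and> 2 \<le> card S \<and> card S \<le> card U"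
  unfolding VV_def cardU' by auto

lemma up_mem: "G \<in> Fc U k \<Longrightarrow> C \<in> G \<union> {U} \<Longrightarrow> up a C G \<in> Fc (insert a U) k"
proof -
  assume G: "G \<in> Fc U k" and C: "C \<in> G \<union> {U}"
  have GV: "G \<subseteq> VV U" and Gl: "lam G" and Gk: "card G = k" using G by (auto simp: Fc_def)
  have Cne: "C \<noteq> {}" using C GV c2 VV_sub by fastforce
  let ?f = "\<lambda>D. if C \<subseteq> D then insert a D else D"
  have aD: "a \<notin> D" if "D \<in> G" for D using that GV VV_sub anot by blast
  have inj: "inj_on ?f G"
    by (rule inj_onI) (metis aD insertCI insert_Diff1 Diff_insert_absorb)
  have fV: "?f D \<in> VV (insert a U)" if "D \<in> G" for D
  proof -
    have D: "D \<subseteq> U" "finite D" "2 \<le> card D" "card D < card U" using VV_sub that GV by blast+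
    show ?thesis unfolding VV'_iff using D aD[OF that] by auto
  qed
  have s1: "up a C G \<subseteq> VV (insert a U)" unfolding up_def using fV by blast
  have s2: "lam (up a C G)"
    unfolding lam_def up_def
  proof (intro ballI, elim imageE)
    fix S T D E assume S: "S = ?f D" and D: "D \<in> G" and T: "T = ?f E" and E: "E \<in> G"
    have l: "D \<subseteq> E \<or> E \<subseteq> D \<or> D \<inter> E = {}" using Gl D E unfolding lam_def by blast
    have "a \<notin> D" "a \<notin> E" using aD D E by auto
    then show "S \<subseteq> T \<or> T \<subseteq> S \<or> S \<inter> T = {}"
      unfolding S T using l Cne by (auto split: if_splits)
  qed
  have s3: "card (up a C G) = k" unfolding up_def using card_image[OF inj] Gk by simp
  show ?thesis using s1 s2 s3 unfolding Fc_def by blast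
qed
lemma aG: "G \<in> Fc U k \<Longrightarrow> D \<in> G \<Longrightarrow> a \<notin> D"
  using anot VV_sub unfolding Fc_def by blast

lemma up_prj: "G \<in> Fc U k \<Longrightarrow> prj a U (up a C G) = G"
proof -
  assume G: "G \<in> Fc U k"
  have "(\<lambda>D. D - {a}) ` up a C G = G"
    unfolding up_def image_image using aG[OF G] by (auto simp: image_iff)
  moreover have "G \<subseteq> VV U" using G Fc_def by blast
  ultimately show ?thesis unfolding prj_def by blast
qed

lemma up_inj: "G \<in> Fc U k \<Longrightarrow> inj_on (\<lambda>C. up a C G) (G \<union> {U})"
proof (rule inj_onI)
  fix C1 C2 assume G: "G \<in> Fc U k" and C1: "C1 \<in> G \<union> {U}" and C2: "C2 \<in> G \<union> {U}"
    and eq: "up a C1 G = up a C2 G"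
  have UG: "U \<notin> G" using G VV_sub unfolding Fc_def by blast
  have sub: "C2 \<subseteq> C1" if "C1 \<in> G" "up a C1 G = up a C2 G" for C1 C2
  proof -
    have "insert a C1 \<in> up a C2 G" using that unfolding up_def by (metis (mono_tags, lifting) image_eqI order_refl)
    then obtain D where D: "D \<in> G" "insert a C1 = (if C2 \<subseteq> D then insert a D else D)" unfolding up_def by blast
    have "a \<notin> D" "a \<notin> C1" using aG[OF G] D that by auto
    then show ?thesis using D by (auto split: if_splits)
  qed
  show "C1 = C2"
  proof (cases "C1 = U \<or> C2 = U")
    case True
    have nb: "\<not> U \<subseteq> C" if "C \<in> G" for C
    proof -
      have "C \<subseteq> U" "card C < card U" using that G VV_sub unfolding Fc_def by blast+
      then show ?thesis using fin by (metis subset_antisym less_irrefl)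
    qed
    show ?thesis
    proof (cases "C1 = U")
      case True
      show ?thesis
      proof (cases "C2 = U")
        case False
        then have "C2 \<in> G" using C2 by blast
        then show ?thesis using sub[OF _ eq[symmetric]] nb True by blast
      qed (use True in simp)
    next
      case False
      then have "C1 \<in> G" "C2 = U" using C1 \<open>C1 = U \<or> C2 = U\<close> by auto
      then show ?thesis using sub[OF _ eq] nb by blast
    qed
  next
    case False
    then show ?thesis using sub eq C1 C2 by blast
  qed
qed
lemma C_facts: "G \<in> Fc U k \<Longrightarrow> C \<in> G \<union> sing U \<Longrightarrow>
   C \<subseteq> U \<and> a \<notin> C \<and> C \<noteq> {} \<and> finite C \<and> card C < card U \<and> C \<noteq> U \<and>
   (\<forall>D\<in>G. D \<subseteq> C \<or> C \<subset> D \<or> D \<inter> C = {})"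
proof -
  assume G: "G \<in> Fc U k" and C: "C \<in> G \<union> sing U"
  have GV: "G \<subseteq> VV U" and Gl: "lam G" using G by (auto simp: Fc_def)
  show ?thesis
  proof (cases "C \<in> G")
    case True
    then have "C \<subseteq> U" "finite C" "2 \<le> card C" "card C < card U" using GV VV_sub by blast+
    moreover have "\<forall>D\<in>G. D \<subseteq> C \<or> C \<subset> D \<or> D \<inter> C = {}" using Gl True unfolding lam_def by blast
    ultimately show ?thesis using anot by auto
  next
    case False
    then obtain x where x: "x \<in> U" "C = {x}" using C unfolding sing_def by blast
    have "\<forall>D\<in>G. D \<subseteq> C \<or> C \<subset> D \<or> D \<inter> C = {}"
    proof
      fix D assume D: "D \<in> G"
      then have "2 \<le> card D" using GV VV_sub by blast
      then have "D \<noteq> {x}" by auto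
      then show "D \<subseteq> C \<or> C \<subset> D \<or> D \<inter> C = {}" using x by blast
    qed
    then show ?thesis using x anot c2 by auto
  qed
qed

lemma fin_Fc: "G \<in> Fc U k \<Longrightarrow> finite G"
proof -
  assume "G \<in> Fc U k"
  then have "G \<subseteq> Pow U" using VV_sub unfolding Fc_def by blast
  then show ?thesis using fin by (meson finite_Pow_iff finite_subset)
qed

lemma sub_mem: "G \<in> Fc U k \<Longrightarrow> C \<in> G \<union> sing U \<union> {U} \<Longrightarrow> sub a U C G \<in> Fc (insert a U) (Suc k)"
proof -
  assume G: "G \<in> Fc U k" and C: "C \<in> G \<union> sing U \<union> {U}"
  have GV: "G \<subseteq> VV U" and Gl: "lam G" and Gk: "card G = k" using G by (auto simp: Fc_def)
  have UG: "U \<notin> G" using G VV_sub unfolding Fc_def by blast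
  have GV': "D \<subseteq> U" "2 \<le> card D" "card D < card U" "finite D" if "D \<in> G" for D
    using that GV VV_sub by blast+
  show ?thesis
  proof (cases "C = U")
    case True
    have s1: "insert U G \<subseteq> VV (insert a U)"
    proof
      fix x assume "x \<in> insert U G"
      then show "x \<in> VV (insert a U)"
      proof
        assume "x = U" then show ?thesis unfolding VV'_iff using c2 by auto
      next
        assume "x \<in> G" then show ?thesis unfolding VV'_iff using GV'[of x] by auto
      qed
    qed
    have s2: "lam (insert U G)" using Gl GV' unfolding lam_def by blast
    have s3: "card (insert U G) = Suc k" using UG fin_Fc[OF G] Gk by simp
    show ?thesis using s1 s2 s3 True unfolding Fc_def sub_def by simp
  next
    case False
    then have CC: "C \<in> G \<union> sing U" using C by blast
    note cf = C_facts[OF G CC]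
    let ?f = "\<lambda>D. if C \<subset> D then insert a D else D"
    have aD: "a \<notin> D" if "D \<in> G" for D using that aG[OF G] by blast
    have inj: "inj_on ?f G"
      by (rule inj_onI) (metis aD insertCI insert_Diff1 Diff_insert_absorb)
    have fV: "?f D \<in> VV (insert a U)" if "D \<in> G" for D
      unfolding VV'_iff using GV'[OF that] aD[OF that] by auto
    have cV: "insert a C \<in> VV (insert a U)"
      unfolding VV'_iff using cf by (auto simp: Suc_le_eq card_gt_0_iff)
    have "upS a C G \<subseteq> VV (insert a U)" unfolding upS_def using fV by blast
    then have s1: "sub a U C G \<subseteq> VV (insert a U)" unfolding sub_def using False cV by simp
    have l1: "lam (upS a C G)"
      unfolding lam_def upS_def
    proof (intro ballI, elim imageE)
      fix S T D E assume S: "S = ?f D" and D: "D \<in> G" and T: "T = ?f E" and E: "E \<in> G"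
      have l: "D \<subseteq> E \<or> E \<subseteq> D \<or> D \<inter> E = {}" using Gl D E unfolding lam_def by blast
      have "a \<notin> D" "a \<notin> E" using aD D E by auto
      then show "S \<subseteq> T \<or> T \<subseteq> S \<or> S \<inter> T = {}"
        unfolding S T using l cf by (auto split: if_splits)
    qed
    have l2: "insert a C \<subseteq> T \<or> T \<subseteq> insert a C \<or> insert a C \<inter> T = {}" if hT: "T \<in> upS a C G" for T
    proof -
      obtain D where D: "D \<in> G" "T = ?f D" using hT unfolding upS_def by blast
      have "D \<subseteq> C \<or> C \<subset> D \<or> D \<inter> C = {}" using cf D by blast
      then show ?thesis using D aD[OF D(1)] by auto
    qed
    have s2: "lam (sub a U C G)" unfolding sub_def using False l1 l2 unfolding lam_def by (simp; blast)
    have nin: "insert a C \<notin> upS a C G"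
    proof
      assume "insert a C \<in> upS a C G"
      then obtain D where D: "D \<in> G" "insert a C = ?f D" unfolding upS_def by blast
      then show False using aD[OF D(1)] cf by (auto split: if_splits)
    qed
    have s3: "card (sub a U C G) = Suc k" unfolding sub_def using False nin card_image[OF inj] Gk fin_Fc[OF G]
      by (simp add: upS_def)
    show ?thesis using s1 s2 s3 unfolding Fc_def by blast
  qed
qed
lemma sub_prj: "G \<in> Fc U k \<Longrightarrow> C \<in> G \<union> sing U \<union> {U} \<Longrightarrow> prj a U (sub a U C G) = G"
proof -
  assume G: "G \<in> Fc U k" and C: "C \<in> G \<union> sing U \<union> {U}"
  have GV: "G \<subseteq> VV U" using G by (auto simp: Fc_def)
  have UV: "U \<notin> VV U" unfolding VV_def by simp
  have ag: "\<And>D. D \<in> G \<Longrightarrow> D - {a} = D" using aG[OF G] by simp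
  show ?thesis
  proof (cases "C = U")
    case True
    have "(\<lambda>D. D - {a}) ` insert U G = insert U G" using ag anot by (simp add: image_iff)
    then show ?thesis unfolding prj_def sub_def using True GV UV by auto
  next
    case False
    then have CC: "C \<in> G \<union> sing U" using C by blast
    note cf = C_facts[OF G CC]
    have "(\<lambda>D. D - {a}) ` upS a C G = G"
      unfolding upS_def image_image using aG[OF G] by (auto simp: image_iff)
    then have e: "(\<lambda>D. D - {a}) ` sub a U C G = insert C G" unfolding sub_def using False cf by simp
    have "C \<in> VV U \<Longrightarrow> C \<in> G"
    proof -
      assume "C \<in> VV U"
      then have "2 \<le> card C" unfolding VV_def by blast
      then show "C \<in> G" using CC unfolding sing_def by auto
    qed
    then show ?thesis unfolding prj_def e using GV by blast
  qed
qed

lemma sub_inj: "G \<in> Fc U k \<Longrightarrow> inj_on (\<lambda>C. sub a U C G) (G \<union> sing U \<union> {U})"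
proof (rule inj_onI)
  fix C1 C2 assume G: "G \<in> Fc U k" and C1: "C1 \<in> G \<union> sing U \<union> {U}" and C2: "C2 \<in> G \<union> sing U \<union> {U}"
    and eq: "sub a U C1 G = sub a U C2 G"
  have noU: False if "C1 = U" "C2 \<noteq> U" "C2 \<in> G \<union> sing U \<union> {U}" "sub a U C1 G = sub a U C2 G" for C1 C2
  proof -
    have "insert a C2 \<in> insert U G" using that unfolding sub_def by auto
    then show False using anot aG[OF G] by auto
  qed
  have le: "C1 = C2 \<or> C2 \<subset> C1" if "C1 \<in> G \<union> sing U" "C2 \<in> G \<union> sing U" "C1 \<noteq> U" "C2 \<noteq> U"
    "sub a U C1 G = sub a U C2 G" for C1 C2
  proof -
    have "insert a C1 \<in> insert (insert a C2) (upS a C2 G)" using that unfolding sub_def by auto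
    then consider "insert a C1 = insert a C2" | D where "D \<in> G" "insert a C1 = (if C2 \<subset> D then insert a D else D)"
      unfolding upS_def by blast
    then show ?thesis
    proof cases
      case 1 then show ?thesis using C_facts[OF G that(1)] C_facts[OF G that(2)]
        by (metis Diff_insert_absorb)
    next
      case 2
      then have "a \<notin> D" using aG[OF G] by blast
      then show ?thesis using 2 C_facts[OF G that(1)]
        by (auto split: if_splits)
    qed
  qed
  show "C1 = C2"
  proof (cases "C1 = U \<or> C2 = U")
    case True
    then show ?thesis using noU[OF _ _ C2 eq] noU[OF _ _ C1 eq[symmetric]] by blast
  next
    case False
    then have "C1 \<in> G \<union> sing U" "C2 \<in> G \<union> sing U" using C1 C2 by auto
    then show ?thesis using le[OF _ _ _ _ eq] le[OF _ _ _ _ eq[symmetric]] False by blast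
  qed
qed
lemma prj_lam: "F \<in> Fc (insert a U) k \<Longrightarrow> lam (prj a U F)"
proof -
  assume "F \<in> Fc (insert a U) k"
  then have Fl: "lam F" unfolding Fc_def by blast
  show ?thesis unfolding lam_def prj_def
  proof (intro ballI)
    fix S T assume "S \<in> (\<lambda>D. D - {a}) ` F \<inter> VV U" "T \<in> (\<lambda>D. D - {a}) ` F \<inter> VV U"
    then obtain D E where "D \<in> F" "E \<in> F" "S = D - {a}" "T = E - {a}" by blast
    then show "S \<subseteq> T \<or> T \<subseteq> S \<or> S \<inter> T = {}" using Fl unfolding lam_def by blast
  qed
qed

lemma decomp: "F \<in> Fc (insert a U) k \<Longrightarrow>
   (\<exists>C\<in>prj a U F \<union> {U}. F = up a C (prj a U F)) \<or>
   (\<exists>C\<in>prj a U F \<union> sing U \<union> {U}. F = sub a U C (prj a U F))"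
proof -
  assume F: "F \<in> Fc (insert a U) k"
  define G where "G = prj a U F"
  have Fl: "lam F" using F unfolding Fc_def by blast
  have FV: "D \<subseteq> insert a U" "finite D" "2 \<le> card D" "card D \<le> card U" if "D \<in> F" for D
  proof -
    have "D \<in> VV (insert a U)" using that F unfolding Fc_def by blast
    then have "D \<subseteq> insert a U \<and> 2 \<le> card D \<and> card D \<le> card U" unfolding VV'_iff .
    then show "D \<subseteq> insert a U" "finite D" "2 \<le> card D" "card D \<le> card U"
      using fin by (auto intro: finite_subset)
  qed
  have VVU: "D \<in> VV U \<longleftrightarrow> D \<subseteq> U \<and> 2 \<le> card D \<and> card D < card U" for D unfolding VV_def by simp
  have Gm: "y \<in> G \<longleftrightarrow> (\<exists>x\<in>F. y = x - {a}) \<and> y \<in> VV U" for y unfolding G_def prj_def by blast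
  have na: "x \<in> VV U \<longleftrightarrow> x \<noteq> U" if "x \<in> F" "a \<notin> x" for x
  proof -
    have "x \<subseteq> U" using FV[OF that(1)] that(2) by blast
    show ?thesis
    proof (cases "x = U")
      case False
      then have "card x < card U" using \<open>x \<subseteq> U\<close> fin by (simp add: psubset_card_mono psubsetI)
      then show ?thesis using FV[OF that(1)] VVU[of x] \<open>x \<subseteq> U\<close> False by simp
    qed (simp add: VVU)
  qed
  have cxa: "card (x - {a}) = card x - 1" if "x \<in> F" "a \<in> x" for x using that FV by simp
  have xaU: "x - {a} \<subseteq> U" if "x \<in> F" for x using FV[OF that] by blast
  show ?thesis
  proof (cases "U \<in> F")
    case True
    have noa: "a \<notin> D" if "D \<in> F" for D
    proof
      assume aD: "a \<in> D"
      have "D \<subseteq> U \<or> U \<subseteq> D \<or> D \<inter> U = {}" using Fl True that unfolding lam_def by blast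
      moreover have "\<not> D \<subseteq> U" using aD anot by blast
      moreover have "\<not> U \<subseteq> D"
      proof
        assume "U \<subseteq> D" then have "insert a U \<subseteq> D" using aD by blast
        then have "card (insert a U) \<le> card D" using FV[OF that] by (simp add: card_mono)
        then show False using FV[OF that] cardU' by simp
      qed
      moreover have "D \<inter> U \<noteq> {}"
      proof
        assume "D \<inter> U = {}" then have "D \<subseteq> {a}" using FV[OF that] by blast
        then have "card D \<le> card {a}" by (intro card_mono) auto
        then have "card D \<le> 1" by simp
        then show False using FV[OF that] by simp
      qed
      ultimately show False by blast
    qed
    have "G = F - {U}"
    proof
      show "G \<subseteq> F - {U}"
      proof
        fix y assume "y \<in> G"
        then obtain x where x: "x \<in> F" "y = x - {a}" "y \<in> VV U" unfolding Gm by blast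
        then have "y = x" using noa by blast
        then show "y \<in> F - {U}" using x na noa by blast
      qed
      show "F - {U} \<subseteq> G"
      proof
        fix x assume x: "x \<in> F - {U}"
        then have "x - {a} = x" "x \<in> VV U" using noa na by auto
        then show "x \<in> G" unfolding Gm using x by blast
      qed
    qed
    then have "F = sub a U U G" unfolding sub_def using True by auto
    then show ?thesis unfolding G_def by blast
  next
    case UF: False
    show ?thesis
    proof (cases "\<exists>D\<in>F. a \<in> D")
      case False
      have "G = F"
      proof
        show "G \<subseteq> F"
        proof
          fix y assume "y \<in> G"
          then obtain x where x: "x \<in> F" "y = x - {a}" "y \<in> VV U" unfolding Gm by blast
          then show "y \<in> F" using False by auto
        qed
        show "F \<subseteq> G"
        proof
          fix x assume x: "x \<in> F"
          then have "x - {a} = x" "x \<in> VV U" using False na UF by auto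
          then show "x \<in> G" unfolding Gm using x by blast
        qed
      qed
      moreover have "up a U G = G"
      proof -
        have "\<not> U \<subseteq> D" if "D \<in> G" for D
        proof
          assume "U \<subseteq> D"
          moreover have "D \<subseteq> U" "card D < card U" using that Gm VVU by auto
          ultimately show False by auto
        qed
        then show ?thesis unfolding up_def by simp
      qed
      ultimately show ?thesis unfolding G_def by auto
    next
      case True
      define M where "M = {D\<in>F. a \<in> D}"
      have "F \<subseteq> Pow (insert a U)" using FV by blast
      then have "finite F" using fin by (meson finite_Pow_iff finite_insert finite_subset)
      then have Mfin: "finite M" unfolding M_def by simp
      have Mne: "M \<noteq> {}" using True unfolding M_def by blast
      define C0 where "C0 = arg_min_on card M"
      have C0M: "C0 \<in> M" unfolding C0_def using arg_min_if_finite(1)[OF Mfin Mne] .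
      have C0min: "\<not> card D < card C0" if "D \<in> M" for D
        unfolding C0_def using arg_min_if_finite(2)[OF Mfin Mne] that by blast
      have C0F: "C0 \<in> F" "a \<in> C0" using C0M M_def by auto
      have C0sub: "C0 \<subseteq> D" if "D \<in> F" "a \<in> D" for D
      proof -
        have "C0 \<subseteq> D \<or> D \<subseteq> C0 \<or> C0 \<inter> D = {}" using Fl C0F that unfolding lam_def by blast
        moreover have "D = C0" if DC: "D \<subseteq> C0"
        proof -
          have "card D \<le> card C0" using card_mono[OF FV(2)[OF C0F(1)] DC] .
          moreover have "D \<in> M" using \<open>D \<in> F\<close> \<open>a \<in> D\<close> M_def by blast
          ultimately have "card D = card C0" using C0min[of D] by linarith
          then show ?thesis using card_subset_eq[OF FV(2)[OF C0F(1)] DC] by simp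
        qed
        ultimately show ?thesis using that C0F by blast
      qed
      define R where "R = C0 - {a}"
      have cR: "card R = card C0 - 1" unfolding R_def using cxa C0F by simp
      have RU: "R \<subseteq> U" unfolding R_def using xaU C0F by blast
      have Rne: "R \<noteq> {}" using cR FV(3)[OF C0F(1)] by auto
      have C0R: "C0 = insert a R" unfolding R_def using C0F by blast
      have Nrel: "x \<subseteq> R \<or> x \<inter> R = {}" if "x \<in> F" "a \<notin> x" for x
      proof -
        have "C0 \<subseteq> x \<or> x \<subseteq> C0 \<or> C0 \<inter> x = {}" using Fl C0F that unfolding lam_def by blast
        then show ?thesis using that C0F unfolding R_def by blast
      qed
      have RneU: "R \<noteq> U"
      proof
        assume "R = U"
        then have "C0 = insert a U" using C0R by simp
        then show False using FV(4)[OF C0F(1)] cardU' by simp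
      qed
      show ?thesis
      proof (cases "R \<in> F \<or> card R = 1")
        case True
        have RC: "R \<in> G \<union> sing U"
        proof (cases "R \<in> F")
          case True
          then have "R \<in> VV U" using na[of R] RneU RU anot by blast
          then have "R \<in> G" unfolding Gm R_def using C0F by blast
          then show ?thesis by blast
        next
          case False
          then obtain x where "R = {x}" using \<open>R \<in> F \<or> card R = 1\<close> card_1_singletonE by blast
          then show ?thesis unfolding sing_def using RU by blast
        qed
        let ?f = "\<lambda>D. if R \<subset> D then insert a D else D"
        have "F = insert C0 (?f ` G)"
        proof
          show "F \<subseteq> insert C0 (?f ` G)"
          proof
            fix x assume x: "x \<in> F"
            show "x \<in> insert C0 (?f ` G)"
            proof (cases "a \<in> x")
              case True
              show ?thesis
              proof (cases "x = C0")
                case False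
                then have "C0 \<subset> x" using C0sub x True by blast
                then have R1: "R \<subset> x - {a}" using C0R anot RU by blast
                have "card R < card (x - {a})" using psubset_card_mono[OF _ R1] FV(2)[OF x] by simp
                then have "2 \<le> card (x - {a})" using cR FV(3)[OF C0F(1)] by simp
                moreover have "card (x - {a}) < card U" using cxa[OF x True] FV(3,4)[OF x] by simp
                ultimately have "x - {a} \<in> G" unfolding Gm VVU using x xaU by blast
                moreover have "x = ?f (x - {a})" using R1 True by auto
                ultimately have "x \<in> ?f ` G" by (rule rev_image_eqI)
                then show ?thesis by (rule insertI2)
              qed simp
            next
              case False
              then have "x \<in> G" unfolding Gm using x na UF by auto
              moreover have "x = ?f x" using Nrel[OF x False] Rne by auto
              ultimately have "x \<in> ?f ` G" by (rule rev_image_eqI)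
              then show ?thesis by (rule insertI2)
            qed
          qed
          show "insert C0 (?f ` G) \<subseteq> F"
          proof
            fix z assume zin: "z \<in> insert C0 (?f ` G)"
            show "z \<in> F"
            proof (cases "z = C0")
              case True then show ?thesis using C0F by simp
            next
              case False
              have "z \<in> ?f ` G" using zin
              proof (rule insertE)
                assume "z = C0" then show ?thesis using False by contradiction
              qed
              then obtain y where "z = ?f y" "y \<in> G" by (rule imageE)
              then have 2: "y \<in> G" "z = ?f y" by auto
              then obtain x where x: "x \<in> F" "y = x - {a}" "y \<in> VV U" unfolding Gm by blast
              show ?thesis
              proof (cases "a \<in> x")
                case True
                show ?thesis
                proof (cases "x = C0")
                  case True
                  then have "y = R" using x R_def by simp
                  then have "card R \<noteq> 1" using x VVU by auto
                  then have "R \<in> F" using \<open>R \<in> F \<or> card R = 1\<close> by blast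
                  then show ?thesis using 2 \<open>y = R\<close> by simp
                next
                  case False
                  then have "C0 \<subset> x" using C0sub x True by blast
                  then have "R \<subset> y" using C0R anot RU x by blast
                  then show ?thesis using 2 x True by (simp add: insert_absorb)
                qed
              next
                case False
                then have "y = x" using x by simp
                moreover have "\<not> R \<subset> x" using Nrel[OF x(1) False] Rne by blast
                ultimately show ?thesis using 2(2) x(1) by simp
              qed
            qed
          qed
        qed
        then have "F = sub a U R G" unfolding sub_def upS_def using RneU C0R by simp
        then have e: "F = sub a U R (prj a U F)" unfolding G_def .
        have "R \<in> prj a U F \<union> sing U \<union> {U}" using RC unfolding G_def by blast
        then show ?thesis using e by blast
      next
        case False
        have "finite R" using RU fin finite_subset by blast
        then have "card R \<noteq> 0" using Rne by simp
        then have c2R: "2 \<le> card R" using False by linarith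
        have RG: "R \<in> G"
        proof -
          have "card R < card U" using cR FV(4)[OF C0F(1)] FV(3)[OF C0F(1)] by simp
          moreover have "R = C0 - {a}" by (simp add: R_def)
          ultimately show ?thesis unfolding Gm VVU using c2R RU C0F(1) by blast
        qed
        let ?f = "\<lambda>D. if R \<subseteq> D then insert a D else D"
        have "F = ?f ` G"
        proof
          show "F \<subseteq> ?f ` G"
          proof
            fix x assume x: "x \<in> F"
            show "x \<in> ?f ` G"
            proof (cases "a \<in> x")
              case True
              then have "C0 \<subseteq> x" using C0sub x by blast
              then have R1: "R \<subseteq> x - {a}" using C0R anot RU by blast
              have "card R \<le> card (x - {a})" using card_mono[OF _ R1] FV(2)[OF x] by simp
              then have "2 \<le> card (x - {a})" using c2R by simp
              moreover have "card (x - {a}) < card U" using cxa[OF x True] FV(3,4)[OF x] by simp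
              ultimately have "x - {a} \<in> G" unfolding Gm VVU using x xaU by blast
              moreover have "x = ?f (x - {a})" using R1 True by auto
              ultimately show ?thesis by (rule rev_image_eqI)
            next
              case False
              then have xG: "x \<in> G" unfolding Gm using x na UF by auto
              have "\<not> R \<subseteq> x"
              proof
                assume "R \<subseteq> x"
                then have "x = R \<or> R = {}" using Nrel[OF x False] by blast
                then show False using x \<open>\<not> (R \<in> F \<or> card R = 1)\<close> Rne by blast
              qed
              then have "x = ?f x" by simp
              with xG show ?thesis by (rule rev_image_eqI)
            qed
          qed
          show "?f ` G \<subseteq> F"
          proof
            fix z assume "z \<in> ?f ` G"
            then obtain y where y': "z = ?f y" "y \<in> G" by (rule imageE)
            then have y: "y \<in> G" "z = ?f y" by auto
            obtain x where x: "x \<in> F" "y = x - {a}" "y \<in> VV U" using y(1) unfolding Gm by blast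
            show "z \<in> F"
            proof (cases "a \<in> x")
              case True
              then have "R \<subseteq> y" using C0sub[OF x(1) True] x(2) C0R anot RU by blast
              then show ?thesis using y x True by (simp add: insert_absorb)
            next
              case False
              then have "y = x" using x by simp
              moreover have "\<not> R \<subseteq> x"
              proof
                assume "R \<subseteq> x"
                then have "x = R \<or> R = {}" using Nrel[OF x(1) False] by blast
                then show False using x(1) \<open>\<not> (R \<in> F \<or> card R = 1)\<close> Rne by blast
              qed
              ultimately show ?thesis using y(2) x(1) by simp
            qed
          qed
        qed
        then have "F = up a R G" unfolding up_def .
        then have e: "F = up a R (prj a U F)" unfolding G_def .
        have "R \<in> prj a U F \<union> {U}" using RG unfolding G_def by blast
        then show ?thesis using e by blast
      qed
    qed
  qed
qed

lemma fin_Fc_set: "finite (Fc U k)"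
proof -
  have "VV U \<subseteq> Pow U" unfolding VV_def by auto
  moreover have "Fc U k \<subseteq> Pow (VV U)" unfolding Fc_def by auto
  ultimately have "Fc U k \<subseteq> Pow (Pow U)" by blast
  then show ?thesis using fin by (meson finite_Pow_iff finite_subset)
qed

lemma UnotG: "G \<in> Fc U k \<Longrightarrow> U \<notin> G"
proof -
  assume "G \<in> Fc U k"
  then have "G \<subseteq> VV U" unfolding Fc_def by blast
  moreover have "U \<notin> VV U" unfolding VV_def by simp
  ultimately show ?thesis by blast
qed

lemma Fc_zero: "Fc U 0 = {{}}"
proof -
  have "F = {}" if "F \<in> Fc U 0" for F
  proof -
    have "finite F" using fin_Fc[OF that] .
    moreover have "card F = 0" using that unfolding Fc_def by blast
    ultimately show ?thesis by simp
  qed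
  moreover have "{} \<in> Fc U 0" unfolding Fc_def lam_def by simp
  ultimately show ?thesis by blast
qed

lemma card_up_idx: "G \<in> Fc U k \<Longrightarrow> card (G \<union> {U}) = Suc k"
proof -
  assume G: "G \<in> Fc U k"
  have "G \<union> {U} = insert U G" by blast
  moreover have "card G = k" using G unfolding Fc_def by blast
  ultimately show ?thesis using UnotG[OF G] fin_Fc[OF G] by simp
qed

lemma card_sub_idx: "G \<in> Fc U k \<Longrightarrow> card (G \<union> sing U \<union> {U}) = Suc (k + card U)"
proof -
  assume G: "G \<in> Fc U k"
  have cs: "card (sing U) = card U" unfolding sing_def by (rule card_image) (simp add: inj_on_def)
  have fs: "finite (sing U)" unfolding sing_def using fin by simp
  have d: "G \<inter> sing U = {}"
  proof -
    have "2 \<le> card D" if "D \<in> G" for D using that G VV_sub unfolding Fc_def by blast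
    then show ?thesis unfolding sing_def by fastforce
  qed
  have "card (G \<union> sing U) = k + card U" using card_Un_disjoint[OF fin_Fc[OF G] fs d] cs G
    unfolding Fc_def by simp
  moreover have "U \<notin> G \<union> sing U"
  proof
    assume "U \<in> G \<union> sing U"
    then have "U \<in> sing U" using UnotG[OF G] by blast
    then obtain x where "U = {x}" unfolding sing_def by blast
    then show False using c2 by simp
  qed
  ultimately show ?thesis using fin_Fc[OF G] fs by simp
qed

lemma recur: "card (Fc (insert a U) (Suc k)) = (k + 2) * card (Fc U (Suc k)) + (Suc k + card U) * card (Fc U k)"
proof -
  define A where "A = (\<Union>G\<in>Fc U (Suc k). (\<lambda>C. up a C G) ` (G \<union> {U}))"
  define B where "B = (\<Union>G\<in>Fc U k. (\<lambda>C. sub a U C G) ` (G \<union> sing U \<union> {U}))"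
  have eq: "Fc (insert a U) (Suc k) = A \<union> B"
  proof
    show "A \<union> B \<subseteq> Fc (insert a U) (Suc k)" unfolding A_def B_def using up_mem sub_mem by blast
    show "Fc (insert a U) (Suc k) \<subseteq> A \<union> B"
    proof
      fix F assume F: "F \<in> Fc (insert a U) (Suc k)"
      define G where "G = prj a U F"
      have GF: "G \<in> Fc U (card G)" unfolding Fc_def G_def using prj_lam[OF F] unfolding prj_def by blast
      from decomp[OF F] show "F \<in> A \<union> B"
      proof
        assume "\<exists>C\<in>prj a U F \<union> {U}. F = up a C (prj a U F)"
        then obtain C where C0: "C \<in> prj a U F \<union> {U}" "F = up a C (prj a U F)" by (rule bexE)
        note C = C0[folded G_def]
        have "F \<in> Fc (insert a U) (card G)" using up_mem[OF GF C(1)] unfolding C(2)[symmetric] .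
        then have "card G = Suc k" using F unfolding Fc_def by simp
        have Fi: "F \<in> (\<lambda>C. up a C G) ` (G \<union> {U})" using C(1) C(2) by (rule rev_image_eqI)
        have GS: "G \<in> Fc U (Suc k)" using GF \<open>card G = Suc k\<close> by simp
        have "F \<in> A" unfolding A_def by (rule UN_I[of G _ F "\<lambda>G. (\<lambda>C. up a C G) ` (G \<union> {U})", OF GS Fi])
        then show ?thesis by (rule UnI1)
      next
        assume "\<exists>C\<in>prj a U F \<union> sing U \<union> {U}. F = sub a U C (prj a U F)"
        then obtain C where C0: "C \<in> prj a U F \<union> sing U \<union> {U}" "F = sub a U C (prj a U F)" by (rule bexE)
        note C = C0[folded G_def]
        have "F \<in> Fc (insert a U) (Suc (card G))" using sub_mem[OF GF C(1)] unfolding C(2)[symmetric] .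
        then have "card G = k" using F unfolding Fc_def by simp
        have Fi: "F \<in> (\<lambda>C. sub a U C G) ` (G \<union> sing U \<union> {U})" using C(1) C(2) by (rule rev_image_eqI)
        have GS: "G \<in> Fc U k" using GF \<open>card G = k\<close> by simp
        have "F \<in> B" unfolding B_def by (rule UN_I[of G _ F "\<lambda>G. (\<lambda>C. sub a U C G) ` (G \<union> sing U \<union> {U})", OF GS Fi])
        then show ?thesis by (rule UnI2)
      qed
    qed
  qed
  have disj: "A \<inter> B = {}"
  proof (rule ccontr)
    assume "A \<inter> B \<noteq> {}"
    then obtain F where "F \<in> A" "F \<in> B" by blast
    from \<open>F \<in> A\<close> obtain G1 where G1a: "G1 \<in> Fc U (Suc k)" "F \<in> (\<lambda>C. up a C G1) ` (G1 \<union> {U})"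
      unfolding A_def by (rule UN_E)
    from G1a(2) obtain C1 where G1b: "F = up a C1 G1" "C1 \<in> G1 \<union> {U}" by (rule imageE)
    from \<open>F \<in> B\<close> obtain G2 where G2a: "G2 \<in> Fc U k" "F \<in> (\<lambda>C. sub a U C G2) ` (G2 \<union> sing U \<union> {U})"
      unfolding B_def by (rule UN_E)
    from G2a(2) obtain C2 where G2b: "F = sub a U C2 G2" "C2 \<in> G2 \<union> sing U \<union> {U}" by (rule imageE)
    have G1: "G1 \<in> Fc U (Suc k)" "C1 \<in> G1 \<union> {U}" "F = up a C1 G1" using G1a G1b by auto
    have G2: "G2 \<in> Fc U k" "C2 \<in> G2 \<union> sing U \<union> {U}" "F = sub a U C2 G2" using G2a G2b by auto
    have "prj a U F = G1" using up_prj[OF G1(1)] G1(3) by simp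
    moreover have "prj a U F = G2" using sub_prj[OF G2(1,2)] G2(3) by simp
    ultimately have "G1 = G2" by simp
    then show False using G1(1) G2(1) unfolding Fc_def by simp
  qed
  have cA: "card A = (k + 2) * card (Fc U (Suc k))"
  proof -
    have "card A = (\<Sum>G\<in>Fc U (Suc k). card ((\<lambda>C. up a C G) ` (G \<union> {U})))"
      unfolding A_def
    proof (rule card_UN_disjoint[OF fin_Fc_set])
      show "\<forall>G\<in>Fc U (Suc k). finite ((\<lambda>C. up a C G) ` (G \<union> {U}))" using fin_Fc by blast
      show "\<forall>G1\<in>Fc U (Suc k). \<forall>G2\<in>Fc U (Suc k). G1 \<noteq> G2 \<longrightarrow>
        (\<lambda>C. up a C G1) ` (G1 \<union> {U}) \<inter> (\<lambda>C. up a C G2) ` (G2 \<union> {U}) = {}"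
      proof (intro ballI impI)
        fix G1 G2 assume G: "G1 \<in> Fc U (Suc k)" "G2 \<in> Fc U (Suc k)" "G1 \<noteq> G2"
        show "(\<lambda>C. up a C G1) ` (G1 \<union> {U}) \<inter> (\<lambda>C. up a C G2) ` (G2 \<union> {U}) = {}"
        proof (rule ccontr)
          assume "(\<lambda>C. up a C G1) ` (G1 \<union> {U}) \<inter> (\<lambda>C. up a C G2) ` (G2 \<union> {U}) \<noteq> {}"
          then obtain C1 C2 where "up a C1 G1 = up a C2 G2" by blast
          then have "prj a U (up a C1 G1) = prj a U (up a C2 G2)" by simp
          then show False using up_prj[OF G(1)] up_prj[OF G(2)] G(3) by simp
        qed
      qed
    qed
    also have "\<dots> = (\<Sum>G\<in>Fc U (Suc k). k + 2)"
    proof (rule sum.cong[OF refl])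
      fix G assume G: "G \<in> Fc U (Suc k)"
      show "card ((\<lambda>C. up a C G) ` (G \<union> {U})) = k + 2"
        using card_image[OF up_inj[OF G]] card_up_idx[OF G] by simp
    qed
    finally show ?thesis by simp
  qed
  have cB: "card B = (Suc k + card U) * card (Fc U k)"
  proof -
    have "card B = (\<Sum>G\<in>Fc U k. card ((\<lambda>C. sub a U C G) ` (G \<union> sing U \<union> {U})))"
      unfolding B_def
    proof (rule card_UN_disjoint[OF fin_Fc_set])
      show "\<forall>G\<in>Fc U k. finite ((\<lambda>C. sub a U C G) ` (G \<union> sing U \<union> {U}))"
        using fin_Fc fin unfolding sing_def by blast
      show "\<forall>G1\<in>Fc U k. \<forall>G2\<in>Fc U k. G1 \<noteq> G2 \<longrightarrow>
        (\<lambda>C. sub a U C G1) ` (G1 \<union> sing U \<union> {U}) \<inter> (\<lambda>C. sub a U C G2) ` (G2 \<union> sing U \<union> {U}) = {}"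
      proof (intro ballI impI)
        fix G1 G2 assume G: "G1 \<in> Fc U k" "G2 \<in> Fc U k" "G1 \<noteq> G2"
        show "(\<lambda>C. sub a U C G1) ` (G1 \<union> sing U \<union> {U}) \<inter> (\<lambda>C. sub a U C G2) ` (G2 \<union> sing U \<union> {U}) = {}"
        proof (rule ccontr)
          assume "(\<lambda>C. sub a U C G1) ` (G1 \<union> sing U \<union> {U}) \<inter> (\<lambda>C. sub a U C G2) ` (G2 \<union> sing U \<union> {U}) \<noteq> {}"
          then obtain C1 C2 where C: "C1 \<in> G1 \<union> sing U \<union> {U}" "C2 \<in> G2 \<union> sing U \<union> {U}"
            "sub a U C1 G1 = sub a U C2 G2" by blast
          then have "prj a U (sub a U C1 G1) = prj a U (sub a U C2 G2)" by simp
          then show False using sub_prj[OF G(1) C(1)] sub_prj[OF G(2) C(2)] G(3) by simp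
        qed
      qed
    qed
    also have "\<dots> = (\<Sum>G\<in>Fc U k. Suc k + card U)"
    proof (rule sum.cong[OF refl])
      fix G assume G: "G \<in> Fc U k"
      show "card ((\<lambda>C. sub a U C G) ` (G \<union> sing U \<union> {U})) = Suc k + card U"
        using card_image[OF sub_inj[OF G]] card_sub_idx[OF G] by simp
    qed
    finally show ?thesis by simp
  qed
  have fsU: "finite (sing U)" unfolding sing_def using fin by simp
  have "finite A" unfolding A_def
    by (rule finite_UN_I[OF fin_Fc_set]) (simp add: fin_Fc)
  moreover have "finite B" unfolding B_def
    by (rule finite_UN_I[OF fin_Fc_set]) (simp add: fin_Fc fsU)
  ultimately
  have "card (A \<union> B) = card A + card B" by (rule card_Un_disjoint) fact+
  then show ?thesis using eq cA cB by simp
qed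

end

lemma vert_eq: "whitehouse_vertices n = VV {2..n}"
proof -
  have c: "card {2..n} = Suc n - 2" by simp
  show ?thesis unfolding whitehouse_vertices_def VV_def c by (rule Collect_cong) linarith
qed

lemma face_eq: "whitehouse_face n F \<longleftrightarrow> F \<subseteq> VV {2..n} \<and> lam F"
  unfolding whitehouse_face_def lam_def vert_eq by blast

lemma ctxI: "3 \<le> (n::nat) \<Longrightarrow> ctx {2..n} (0::nat)"
  by unfold_locales auto

lemma ctxI2: "4 \<le> (n::nat) \<Longrightarrow> ctx {2..n-1} n"
  by unfold_locales auto

lemma Fc0: "3 \<le> (n::nat) \<Longrightarrow> card (Fc {2..n} 0) = 1"
proof -
  assume "3 \<le> n"
  then interpret ctx "{2..n}" "0::nat" by (rule ctxI)
  show ?thesis using Fc_zero by simp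
qed

lemma Frec: "4 \<le> (n::nat) \<Longrightarrow> card (Fc {2..n} (Suc k)) =
   (k + 2) * card (Fc {2..n-1} (Suc k)) + (Suc k + (n - 2)) * card (Fc {2..n-1} k)"
proof -
  assume n: "4 \<le> n"
  then interpret ctx "{2..n-1}" n by (rule ctxI2)
  have "insert n {2..n-1} = {2..n}" using n by auto
  moreover have "card {2..n-1} = n - 2" using n by simp
  ultimately show ?thesis using recur[of k] by simp
qed

lemma Fvan: "3 \<le> (n::nat) \<Longrightarrow> n - 2 \<le> k \<Longrightarrow> card (Fc {2..n} k) = 0"
proof (induction n arbitrary: k rule: nat_induct_at_least)
  case base
  have "VV {2..3::nat} = {}" unfolding VV_def by auto
  then have "Fc {2..3::nat} k = {}" using base unfolding Fc_def by auto
  then show ?case by simp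
next
  case (Suc n)
  then obtain k' where k: "k = Suc k'" by (cases k) auto
  have "card (Fc {2..Suc n} (Suc k')) = (k' + 2) * card (Fc {2..n} (Suc k')) + (Suc k' + (Suc n - 2)) * card (Fc {2..n} k')"
    using Frec[of "Suc n" k'] Suc by simp
  moreover have "card (Fc {2..n} (Suc k')) = 0" "card (Fc {2..n} k') = 0" using Suc k by auto
  ultimately show ?case using k by simp
qed

lemma wf_eq: "3 \<le> (m::nat) \<Longrightarrow> -1 \<le> i \<Longrightarrow> whitehouse_f m i = card (Fc {2..m} (nat (i + 1)))"
proof -
  assume m: "3 \<le> m" and i: "-1 \<le> i"
  show ?thesis
  proof (cases "i > int m - 4")
    case True
    then have "m - 2 \<le> nat (i + 1)" by linarith
    then show ?thesis using Fvan[OF m] True unfolding whitehouse_f_def by simp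
  next
    case False
    have "{F. whitehouse_face m F \<and> int (card F) = i + 1} = Fc {2..m} (nat (i + 1))"
      unfolding Fc_def face_eq using i by auto
    then show ?thesis using False i unfolding whitehouse_f_def by simp
  qed
qed

theorem mainTheorem5:
  shows "(\<forall>n::nat. n \<ge> 3 \<longrightarrow> whitehouse_f n (-1) = 1) \<and>
         (\<forall>(n::nat) (i::int). n \<ge> 4 \<longrightarrow> -1 \<le> i \<longrightarrow> i \<le> int n - 4 \<longrightarrow>
            int (whitehouse_f n i) =
              (i + 2) * int (whitehouse_f (n - 1) i)
              + (int n + i - 1) * int (whitehouse_f (n - 1) (i - 1)))"
proof (intro conjI allI impI)
  fix n :: nat assume "3 \<le> n"
  then show "whitehouse_f n (-1) = 1" using wf_eq Fc0 by simp
next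
  fix n :: nat and i :: int assume n: "4 \<le> n" and i1: "-1 \<le> i" and i2: "i \<le> int n - 4"
  have n1: "3 \<le> n - 1" using n by simp
  show "int (whitehouse_f n i) = (i + 2) * int (whitehouse_f (n - 1) i)
              + (int n + i - 1) * int (whitehouse_f (n - 1) (i - 1))"
  proof (cases "i = -1")
    case True
    have "whitehouse_f (n - 1) (i - 1) = 0" using True unfolding whitehouse_f_def by simp
    moreover have "whitehouse_f (n - 1) i = 1" using True wf_eq[OF n1] Fc0[OF n1] by simp
    moreover have "whitehouse_f n i = 1" using True wf_eq[of n] Fc0[of n] n by simp
    ultimately show ?thesis using True by simp
  next
    case False
    define k where "k = nat i"
    have ik: "i = int k" using False i1 k_def by simp
    have nk: "nat (i + 1) = Suc k" using ik by simp
    have e1: "whitehouse_f n i = card (Fc {2..n} (Suc k))" using wf_eq[of n i] n i1 nk by simp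
    have e2: "whitehouse_f (n - 1) i = card (Fc {2..n-1} (Suc k))" using wf_eq[OF n1, of i] i1 nk by simp
    have e3: "whitehouse_f (n - 1) (i - 1) = card (Fc {2..n-1} k)" using wf_eq[OF n1, of "i - 1"] False i1 ik
      by simp
    have r: "card (Fc {2..n} (Suc k)) =
      (k + 2) * card (Fc {2..n-1} (Suc k)) + (Suc k + (n - 2)) * card (Fc {2..n-1} k)"
      using Frec[OF n] .
    define m where "m = Suc k + (n - 2)"
    define X where "X = card (Fc {2..n-1} (Suc k))"
    define Y where "Y = card (Fc {2..n-1} k)"
    have c: "int m = int n + i - 1" using n ik unfolding m_def by simp
    have "int (whitehouse_f n i) = int ((k + 2) * X + m * Y)" using e1 r unfolding m_def X_def Y_def by simp
    also have "\<dots> = (int k + 2) * int X + int m * int Y" by (simp add: algebra_simps)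
    also have "\<dots> = (i + 2) * int (whitehouse_f (n - 1) i)
              + (int n + i - 1) * int (whitehouse_f (n - 1) (i - 1))"
      unfolding e2 e3 c X_def Y_def by (simp add: ik)
    finally show ?thesis .
  qed
qed

end
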